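(* Let $S_n$ be the star on $n$ vertices with edge set $E$, let $f=\{i,j\}\notin E$ be a pair of distinct vertices of $S_n$, and let $B=E\cup\{f\}$. Then the eigenvalues of $\mathfrak{D}_2(S_n)[B,B]$ are $-1$ with multiplicity $n-3$, together with the roots of the cubic polynomial $g(x)=x^3-2(n-1)x^2-7(n-2)x-(n-1)$.
   Context: For a tree $T$, let $\mathcal{V}_2$ be the set of 2-element vertex subsets (edges regarded as elements of $\mathcal{V}_2$). The 2-Steiner distance matrix $\mathfrak{D}_2(T)$ is indexed by $\mathcal{V}_2$, with entry in row $\{i,j\}$, column $\{k,l\}$ equal to the minimum number of edges of a connected subtree of $T$ whose vertex set contains $i,j,k,l$. $M[B,B]$ denotes the principal submatrix with rows and columns indexed by $B$. *)

theory Defs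
  imports Main "HOL-Computational_Algebra.Polynomial" "Jordan_Normal_Form.Char_Poly"
begin

definition edge_rel :: "'a set set \<Rightarrow> ('a \<times> 'a) set" where
  "edge_rel F = {(u,v). {u,v} \<in> F}"

definition connected_subgraph :: "'a set \<Rightarrow> 'a set set \<Rightarrow> 'a set \<Rightarrow> 'a set set \<Rightarrow> bool" where
  "connected_subgraph V E W F \<longleftrightarrow> W \<subseteq> V \<and> F \<subseteq> E \<and> (\<forall>e\<in>F. e \<subseteq> W) \<and>
     (\<forall>u\<in>W. \<forall>v\<in>W. (u,v) \<in> (edge_rel F)\<^sup>*)"

definition steiner_dist :: "'a set \<Rightarrow> 'a set set \<Rightarrow> 'a set \<Rightarrow> nat" where
  "steiner_dist V E S = (LEAST k. \<exists>W F. connected_subgraph V E W F \<and> S \<subseteq> W \<and> finite F \<and> card F = k)"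

definition steiner2_entry :: "'a set \<Rightarrow> 'a set set \<Rightarrow> 'a set \<Rightarrow> 'a set \<Rightarrow> nat" where
  "steiner2_entry V E P Q = steiner_dist V E (P \<union> Q)"

definition star_edges :: "nat \<Rightarrow> nat set set" where
  "star_edges n = {{0,k} | k. 0 < k \<and> k < n}"

text \<open>Principal submatrix of D_2 indexed by a set B, listed via an enumeration \<sigma> of B.\<close>
definition steiner2_submatrix :: "nat \<Rightarrow> 'a set \<Rightarrow> 'a set set \<Rightarrow> (nat \<Rightarrow> 'a set) \<Rightarrow> real mat" where
  "steiner2_submatrix m V E \<sigma> = mat m m (\<lambda>(a,b). real (steiner2_entry V E (\<sigma> a) (\<sigma> b)))"

end

theory Submission
  imports Defs
begin


lemma steiner_star:
  assumes S: "S \<subseteq> {0..<n}" and ab: "a \<in> S" "b \<in> S" "a \<noteq> b"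
  shows "steiner_dist {0..<n} (star_edges n) S = card (S - {0})"
proof -
  have finS: "finite S" using S finite_subset by blast
  let ?F = "(\<lambda>u. {0,u}) ` (S - {0})"
  have inj: "inj_on (\<lambda>u. {0::nat,u}) (S - {0})"
    by (auto simp: inj_on_def doubleton_eq_iff)
  have cardF: "card ?F = card (S - {0})" using card_image[OF inj] .
  have n0: "0 < n" using S ab by auto
  have wit: "connected_subgraph {0..<n} (star_edges n) (insert 0 S) ?F"
    unfolding connected_subgraph_def
  proof (intro conjI ballI)
    show "insert 0 S \<subseteq> {0..<n}" using S n0 by auto
    show "?F \<subseteq> star_edges n" using S by (force simp: star_edges_def)
    show "e \<subseteq> insert 0 S" if "e \<in> ?F" for e using that by auto
    fix u v assume u: "u \<in> insert 0 S" and v: "v \<in> insert 0 S"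
    have to0: "(w, 0) \<in> (edge_rel ?F)\<^sup>*" if "w \<in> insert 0 S" for w
    proof (cases "w = 0")
      case False
      then have "(w,0) \<in> edge_rel ?F" using that
        by (auto simp: edge_rel_def insert_commute)
      then show ?thesis by blast
    qed simp
    have from0: "(0, w) \<in> (edge_rel ?F)\<^sup>*" if "w \<in> insert 0 S" for w
    proof (cases "w = 0")
      case False
      then have "(0,w) \<in> edge_rel ?F" using that
        by (auto simp: edge_rel_def)
      then show ?thesis by blast
    qed simp
    show "(u, v) \<in> (edge_rel ?F)\<^sup>*" using to0[OF u] from0[OF v] by (rule rtrancl_trans)
  qed
  have lower: "card (S - {0}) \<le> card F"
    if c: "connected_subgraph {0..<n} (star_edges n) W F" and SW: "S \<subseteq> W" and fF: "finite F" for W F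
  proof -
    have "?F \<subseteq> F"
    proof
      fix e assume "e \<in> ?F"
      then obtain u where u: "u \<in> S" "u \<noteq> 0" and e: "e = {0,u}" by auto
      obtain v where v: "v \<in> S" "v \<noteq> u" using ab by metis
      have "(u,v) \<in> (edge_rel F)\<^sup>*" using c u v SW unfolding connected_subgraph_def by blast
      then obtain w where "(u,w) \<in> edge_rel F" using v(2)
        by (metis converse_rtranclE)
      hence uw: "{u,w} \<in> F" by (simp add: edge_rel_def)
      hence "{u,w} \<in> star_edges n" using c unfolding connected_subgraph_def by blast
      then obtain k where "{u,w} = {0,k}" by (auto simp: star_edges_def)
      hence "w = 0" using u(2) by (auto simp: doubleton_eq_iff)
      thus "e \<in> F" using uw e by (simp add: insert_commute)
    qed
    thus ?thesis using card_mono[OF fF] cardF by metis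
  qed
  show ?thesis unfolding steiner_dist_def
  proof (rule Least_equality)
    show "\<exists>W F. connected_subgraph {0..<n} (star_edges n) W F \<and> S \<subseteq> W \<and> finite F \<and> card F = card (S - {0})"
      using wit cardF finS by blast
  next
    fix y assume "\<exists>W F. connected_subgraph {0..<n} (star_edges n) W F \<and> S \<subseteq> W \<and> finite F \<and> card F = y"
    then show "card (S - {0}) \<le> y" using lower by blast
  qed
qed



lemma pair_reduce:
  fixes A :: "'a :: comm_ring_1 mat"
  assumes A: "A \<in> carrier_mat (Suc m) (Suc m)" and p: "Suc p < Suc m"
    and eq: "\<And>b. b < Suc m \<Longrightarrow> b \<noteq> p \<Longrightarrow> b \<noteq> Suc p \<Longrightarrow> A$$(p,b) = A$$(Suc p,b)"
    and d1: "A$$(p,p) - A$$(Suc p,p) = d" and d2: "A$$(Suc p,Suc p) - A$$(p,Suc p) = d"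
  shows "det A = d * det (mat m m (\<lambda>(a,b). A$$(insert_index p a, insert_index p b)
            + (if b = p then A$$(insert_index p a, p) else 0)))"
proof -
  define A1 where "A1 = addrow (-1) p (Suc p) A"
  define A2 where "A2 = addcol 1 (Suc p) p A1"
  have A1c: "A1 \<in> carrier_mat (Suc m) (Suc m)" using A by (simp add: A1_def mat_addrow_def)
  have A2c: "A2 \<in> carrier_mat (Suc m) (Suc m)" using A1c by (simp add: A2_def mat_addcol_def)
  have "det A1 = det A" unfolding A1_def by (rule det_addrow[OF p _ A], simp)
  moreover have "det A2 = det A1" unfolding A2_def by (rule det_addcol[OF _ _ A1c], insert p, auto)
  ultimately have dA: "det A = det A2" by simp
  have A2e: "A2 $$ (i,j) = (let B = (\<lambda>i j. if i = p then A$$(i,j) - A$$(Suc p, j) else A$$(i,j)) in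
     if j = Suc p then B i p + B i j else B i j)" if "i < Suc m" "j < Suc m" for i j
    using that A p unfolding A2_def A1_def by (simp add: mat_addrow_def mat_addcol_def Let_def)
  have row: "A2 $$ (p,j) = (if j = p then d else 0)" if "j < Suc m" for j
    using A2e[of p j] that p eq[of j] d1 d2 by (auto simp: Let_def algebra_simps)
  have "det A2 = (\<Sum>j<Suc m. A2 $$ (p,j) * cofactor A2 p j)"
    by (rule laplace_expansion_row[OF A2c], insert p, simp)
  also have "\<dots> = A2 $$ (p,p) * cofactor A2 p p + (\<Sum>j\<in>{..<Suc m} - {p}. A2 $$ (p,j) * cofactor A2 p j)"
    by (rule sum.remove, insert p, auto)
  also have "(\<Sum>j\<in>{..<Suc m} - {p}. A2 $$ (p,j) * cofactor A2 p j) = 0"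
    by (rule sum.neutral, auto simp: row)
  finally have "det A2 = d * cofactor A2 p p" using row[of p] p by simp
  also have "cofactor A2 p p = det (mat_delete A2 p p)"
    unfolding cofactor_def by (simp add: mult_2[symmetric] power_mult)
  also have "mat_delete A2 p p = mat m m (\<lambda>(a,b). A$$(insert_index p a, insert_index p b)
            + (if b = p then A$$(insert_index p a, p) else 0))"
  proof (rule eq_matI)
    fix i j assume i: "i < dim_row (mat m m (\<lambda>(a,b). A$$(insert_index p a, insert_index p b)
            + (if b = p then A$$(insert_index p a, p) else 0)))"
      and j: "j < dim_col (mat m m (\<lambda>(a,b). A$$(insert_index p a, insert_index p b)
            + (if b = p then A$$(insert_index p a, p) else 0)))"
    have i': "insert_index p i < Suc m" "insert_index p i \<noteq> p" using i p by (auto simp: insert_index_def)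
    have j': "insert_index p j < Suc m" using j by (auto simp: insert_index_def)
    show "mat_delete A2 p p $$ (i, j) = mat m m (\<lambda>(a,b). A$$(insert_index p a, insert_index p b)
            + (if b = p then A$$(insert_index p a, p) else 0)) $$ (i, j)"
      using i j A2c i' j' A2e[OF i'(1) j'] 
      by (auto simp: mat_delete_def insert_index_def Let_def)
  qed (insert A2c, auto simp: mat_delete_def)
  finally show ?thesis using dA by simp
qed

lemma det_perm_sim:
  fixes A :: "'a :: comm_ring_1 mat"
  assumes A: "A \<in> carrier_mat n n" and p: "p permutes {0..<n}"
  shows "det (mat n n (\<lambda>(i,j). A $$ (p i, p j))) = det A"
proof -
  define B where "B = mat n n (\<lambda>(i,j). A $$ (p i, j))"
  have B: "B \<in> carrier_mat n n" by (simp add: B_def)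
  have dB: "det B = signof p * det A" unfolding B_def by (rule det_permute_rows[OF A p])
  define C where "C = mat n n (\<lambda>(i,j). B\<^sup>T $$ (p i, j))"
  have dC: "det C = signof p * det B\<^sup>T" unfolding C_def
    by (rule det_permute_rows[OF _ p], insert B, simp)
  have pn: "i < n \<Longrightarrow> p i < n" for i using p by (meson atLeastLessThan_iff permutes_in_image zero_le)
  have "mat n n (\<lambda>(i,j). A $$ (p i, p j)) = C\<^sup>T"
    by (rule eq_matI, auto simp: C_def B_def pn)
  hence "det (mat n n (\<lambda>(i,j). A $$ (p i, p j))) = det C"
    using det_transpose[of C n] by (simp add: C_def)
  also have "\<dots> = signof p * signof p * det A" using dC dB det_transpose[OF B] by simp
  also have "signof p * signof p = (1::'a)"
    by (cases p rule: sign_cases, auto)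
  finally show ?thesis by simp
qed

lemma det2:
  fixes A :: "'a :: comm_ring_1 mat"
  assumes A: "A \<in> carrier_mat 2 2"
  shows "det A = A$$(0,0) * A$$(1,1) - A$$(0,1) * A$$(1,0)"
proof -
  have "det A = (\<Sum>j<2. A $$ (0,j) * cofactor A 0 j)"
    by (rule laplace_expansion_row[OF A], simp)
  also have "\<dots> = A$$(0,0) * A$$(1,1) - A$$(0,1) * A$$(1,0)"
    using A by (simp add: numeral_2_eq_2 cofactor_def det_single mat_delete_def)
  finally show ?thesis .
qed

lemma det3:
  fixes A :: "'a :: comm_ring_1 mat"
  assumes A: "A \<in> carrier_mat 3 3"
  shows "det A = A$$(0,0) * (A$$(1,1) * A$$(2,2) - A$$(1,2) * A$$(2,1))
     - A$$(0,1) * (A$$(1,0) * A$$(2,2) - A$$(1,2) * A$$(2,0))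
     + A$$(0,2) * (A$$(1,0) * A$$(2,1) - A$$(1,1) * A$$(2,0))"
proof -
  have "det A = (\<Sum>j<3. A $$ (0,j) * cofactor A 0 j)"
    by (rule laplace_expansion_row[OF A], simp)
  also have "\<dots> = A $$ (0,0) * cofactor A 0 0 + A $$ (0,1) * cofactor A 0 1 + A $$ (0,2) * cofactor A 0 2"
    by (simp add: numeral_3_eq_3 numeral_2_eq_2)
  also have "cofactor A 0 0 = A$$(1,1) * A$$(2,2) - A$$(1,2) * A$$(2,1)"
    unfolding cofactor_def using A by (subst det2, auto simp: mat_delete_def numeral_2_eq_2)
  also have "cofactor A 0 1 = - (A$$(1,0) * A$$(2,2) - A$$(1,2) * A$$(2,0))"
    unfolding cofactor_def using A by (subst det2, auto simp: mat_delete_def numeral_2_eq_2)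
  also have "cofactor A 0 2 = A$$(1,0) * A$$(2,1) - A$$(1,1) * A$$(2,0)"
    unfolding cofactor_def using A by (subst det2, auto simp: mat_delete_def numeral_2_eq_2)
  finally show ?thesis by (simp add: algebra_simps)
qed



definition c1 :: "nat \<Rightarrow> nat \<Rightarrow> nat \<Rightarrow> real" where
  "c1 k a b = (if a = b then (if a = k+2 then 2 else 1)
     else if (a = k+2 \<and> b < k) \<or> (b = k+2 \<and> a < k) then 3 else 2)"

definition g :: "real \<Rightarrow> nat \<Rightarrow> real \<Rightarrow> nat \<Rightarrow> nat \<Rightarrow> real" where
  "g x k t a b = (if a = b then x else 0) -
     (if b = 0 \<and> 0 < k then (if a = 0 then 2*t - 1 else t * c1 k a 0) else c1 k a b)"

definition GG :: "real \<Rightarrow> nat \<Rightarrow> real \<Rightarrow> real mat" where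
  "GG x k t = mat (k+3) (k+3) (\<lambda>(a,b). g x k t a b)"

lemma GG_step:
  assumes k: "2 \<le> k"
  shows "det (GG x k t) = (x+1) * det (GG x (k-1) (t+1))"
proof -
  have "det (GG x k t) = (x+1) * det (mat (k+2) (k+2) (\<lambda>(a,b). GG x k t $$(insert_index 0 a, insert_index 0 b)
            + (if b = 0 then GG x k t $$(insert_index 0 a, 0) else 0)))"
    by (rule pair_reduce[of _ "k+2"], insert k, auto simp: GG_def g_def c1_def)
  also have "mat (k+2) (k+2) (\<lambda>(a,b). GG x k t $$(insert_index 0 a, insert_index 0 b)
            + (if b = 0 then GG x k t $$(insert_index 0 a, 0) else 0)) = GG x (k-1) (t+1)"
    by (rule eq_matI, insert k, auto simp: GG_def g_def c1_def insert_index_def algebra_simps)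
  finally show ?thesis .
qed

lemma GG_iter:
  assumes "1 \<le> k"
  shows "det (GG x k t) = (x+1)^(k-1) * det (GG x 1 (t + real (k-1)))"
  using assms
proof (induction k arbitrary: t)
  case 0 then show ?case by simp
next
  case (Suc k)
  show ?case
  proof (cases "k = 0")
    case True then show ?thesis by simp
  next
    case False
    have "det (GG x (Suc k) t) = (x+1) * det (GG x k (t+1))" using GG_step[of "Suc k" x t] False by simp
    also have "det (GG x k (t+1)) = (x+1)^(k-1) * det (GG x 1 (t + 1 + real (k-1)))"
      using Suc.IH[of "t+1"] False by simp
    finally show ?thesis using False by (cases k, auto simp: algebra_simps)
  qed
qed

lemma GG_base1:
  "det (GG x 1 t) = (x+1) * ((x+1-2*t)*((x-3)*(x-2) - 8) + 4*((-2*t)*(x-2) - 6*t) - 3*(8*t + (x-3)*(3*t)))"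
proof -
  have "det (GG x 1 t) = (x+1) * det (mat 3 3 (\<lambda>(a,b). GG x 1 t $$(insert_index 1 a, insert_index 1 b)
            + (if b = 1 then GG x 1 t $$(insert_index 1 a, 1) else 0)))"
    by (rule pair_reduce[of _ 3], auto simp: GG_def g_def c1_def)
  also have "det (mat 3 3 (\<lambda>(a,b). GG x 1 t $$(insert_index 1 a, insert_index 1 b)
            + (if b = 1 then GG x 1 t $$(insert_index 1 a, 1) else 0))) = 
     ((x+1-2*t)*((x-3)*(x-2) - 8) + 4*((-2*t)*(x-2) - 6*t) - 3*(8*t + (x-3)*(3*t)))"
    by (subst det3, simp, simp add: GG_def g_def c1_def insert_index_def, algebra)
  finally show ?thesis .
qed

lemma GG_base0: "det (GG x 0 t) = x^3 - 4*x^2 - 7*x - 2"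
  by (subst GG_def, subst det3, simp, simp add: g_def c1_def power2_eq_square power3_eq_cube algebra_simps)



lemma g1: "g x k 1 p q = (if p = q then x else 0) - c1 k p q"
  by (auto simp: g_def c1_def)

theorem theorem5p3:
  fixes n i j :: nat and \<sigma> :: "nat \<Rightarrow> nat set"
  assumes "i < n" and "j < n" and "i \<noteq> j" and "{i, j} \<notin> star_edges n"
    and "bij_betw \<sigma> {0..<n} (star_edges n \<union> {{i, j}})"
  shows "char_poly (steiner2_submatrix n {0..<n} (star_edges n) \<sigma>) =
    [:1, 1:] ^ (n - 3) *
    [:- (real n - 1), - 7 * (real n - 2), - 2 * (real n - 1), 1:]"
proof -
  note in_n = assms(1,2) and ij = assms(3) and nE = assms(4) and bij = assms(5)
  have i0: "i \<noteq> 0" using nE in_n ij by (auto simp: star_edges_def)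
  have j0: "j \<noteq> 0" using nE in_n ij by (auto simp: star_edges_def)
  have n3: "3 \<le> n" using i0 j0 ij in_n by linarith
  define k where "k = n - 3"
  have nk: "n = k + 3" using n3 k_def by simp
  let ?B = "star_edges n \<union> {{i, j}}"
  have Ei: "{0,i} \<in> ?B" using i0 in_n by (auto simp: star_edges_def)
  have Ej: "{0,j} \<in> ?B" using j0 in_n by (auto simp: star_edges_def)
  have Ef: "{i,j} \<in> ?B" by simp
  have img: "\<sigma> ` {0..<n} = ?B" using bij by (simp add: bij_betw_def)
  obtain ai where ai: "ai < n" "\<sigma> ai = {0,i}" using Ei unfolding img[symmetric] by auto
  obtain aj where aj: "aj < n" "\<sigma> aj = {0,j}" using Ej unfolding img[symmetric] by auto
  obtain af where af: "af < n" "\<sigma> af = {i,j}" using Ef unfolding img[symmetric] by auto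
  have inj\<sigma>: "inj_on \<sigma> {0..<n}" using bij bij_betw_def by blast
  have dist: "ai \<noteq> aj" "ai \<noteq> af" "aj \<noteq> af"
    using ai aj af ij i0 j0 by (auto simp: doubleton_eq_iff)
  note dist = dist dist[symmetric]
  define Os where "Os = {0..<n} - {ai, aj, af}"
  have cardO: "card Os = k" unfolding Os_def using ai aj af dist nk by (simp add: card_Diff_subset)
  obtain h where h: "bij_betw h Os {0..<k}" using finite_same_card_bij[of Os "{0..<k}"] cardO Os_def by auto
  have Osdesc: "\<exists>u. \<sigma> a = {0,u} \<and> 0 < u \<and> u < n \<and> u \<noteq> i \<and> u \<noteq> j" if a: "a \<in> Os" for a
  proof -
    have an: "a < n" "a \<noteq> ai" "a \<noteq> aj" "a \<noteq> af" using a Os_def by auto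
    have "\<sigma> a \<in> ?B" using bij an(1) bij_betwE by fastforce
    moreover have "\<sigma> a \<noteq> {i,j}" "\<sigma> a \<noteq> {0,i}" "\<sigma> a \<noteq> {0,j}"
      using an ai aj af inj\<sigma> by (metis atLeastLessThan_iff inj_on_eq_iff zero_le)+
    ultimately obtain u where "\<sigma> a = {0,u}" "0 < u" "u < n" by (auto simp: star_edges_def)
    moreover have "u \<noteq> i" "u \<noteq> j" using calculation \<open>\<sigma> a \<noteq> {0,i}\<close> \<open>\<sigma> a \<noteq> {0,j}\<close> by auto
    ultimately show ?thesis by blast
  qed
  define \<tau> where "\<tau> a = (if a = ai then k else if a = aj then k+1 else if a = af then k+2
      else if a < n then h a else a)" for a
  have \<tau>ai: "\<tau> ai = k" and \<tau>aj: "\<tau> aj = k+1" and \<tau>af: "\<tau> af = k+2"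
    using dist by (auto simp: \<tau>_def)
  note nz = i0 j0 ij i0[symmetric] j0[symmetric] ij[symmetric]
  have hO: "a \<in> Os \<Longrightarrow> h a < k" for a using h bij_betwE by fastforce
  have \<tau>Os: "a \<in> Os \<Longrightarrow> \<tau> a = h a" for a unfolding \<tau>_def Os_def by auto
  have \<tau>big: "a \<in> {ai,aj,af} \<Longrightarrow> k \<le> \<tau> a" for a by (auto simp: \<tau>_def)
  have inj\<tau>: "inj_on \<tau> {0..<n}"
  proof (rule inj_onI)
    fix a b assume a: "a \<in> {0..<n}" and b: "b \<in> {0..<n}" and e: "\<tau> a = \<tau> b"
    have hinj: "inj_on h Os" using h bij_betw_def by blast
    show "a = b"
    proof (cases "a \<in> Os")
      case aO: True
      show ?thesis
      proof (cases "b \<in> Os")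
        case True then show ?thesis using aO e \<tau>Os hinj by (metis inj_on_eq_iff)
      next
        case False
        then have "b \<in> {ai,aj,af}" using b Os_def by auto
        then have "\<tau> b \<ge> k" unfolding \<tau>_def by auto
        then show ?thesis using e \<tau>Os[OF aO] hO[OF aO] by simp
      qed
    next
      case aO: False
      then have ain: "a \<in> {ai,aj,af}" using a Os_def by auto
      show ?thesis
      proof (cases "b \<in> Os")
        case True
        then show ?thesis using \<tau>big[OF ain] e \<tau>Os[OF True] hO[OF True] by simp
      next
        case False
        then have "b \<in> {ai,aj,af}" using b Os_def by auto
        then show ?thesis using ain e dist unfolding \<tau>_def by auto
      qed
    qed
  qed
  have \<tau>img: "\<tau> ` {0..<n} \<subseteq> {0..<n}"
  proof
    fix y assume "y \<in> \<tau> ` {0..<n}"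
    then obtain a where a: "a < n" "y = \<tau> a" by auto
    show "y \<in> {0..<n}"
    proof (cases "a \<in> Os")
      case True then show ?thesis using a \<tau>Os[OF True] hO[OF True] nk by auto
    next
      case False then show ?thesis using a nk Os_def unfolding \<tau>_def by auto
    qed
  qed
  have \<tau>bij: "bij_betw \<tau> {0..<n} {0..<n}"
    unfolding bij_betw_def using inj\<tau> \<tau>img card_image[OF inj\<tau>]
    by (simp add: card_subset_eq)
  have \<tau>perm: "\<tau> permutes {0..<n}"
    by (rule bij_imp_permutes[OF \<tau>bij], auto simp: \<tau>_def dist ai aj af)
  have Bel: "\<sigma> a \<subseteq> {0..<n} \<and> (\<exists>u v. u \<noteq> v \<and> \<sigma> a = {u,v})" if "a < n" for a
  proof -
    have "\<sigma> a \<in> ?B" using bij that bij_betwE by fastforce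
    then show ?thesis using in_n ij by (auto simp: star_edges_def)
  qed
  have entry: "steiner2_entry {0..<n} (star_edges n) (\<sigma> a) (\<sigma> b) = card ((\<sigma> a \<union> \<sigma> b) - {0})"
    if ab: "a < n" "b < n" for a b
  proof -
    obtain u v where "u \<noteq> v" "\<sigma> a = {u,v}" using Bel[OF ab(1)] by blast
    then show ?thesis unfolding steiner2_entry_def
      using Bel[OF ab(1)] Bel[OF ab(2)] by (intro steiner_star[of _ _ u v]) auto
  qed
  have cases_a: "a \<in> Os \<or> a = ai \<or> a = aj \<or> a = af" if "a < n" for a using that Os_def by auto
  have c1eq: "real (card ((\<sigma> a \<union> \<sigma> b) - {0})) = c1 k (\<tau> a) (\<tau> b)" if ab: "a < n" "b < n" for a b
  proof -
    have hinj: "inj_on h Os" using h bij_betw_def by blast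
    show ?thesis
    proof (cases "a \<in> Os")
      case aO: True
      obtain u where u: "\<sigma> a = {0,u}" "0 < u" "u < n" "u \<noteq> i" "u \<noteq> j" using Osdesc[OF aO] by blast
      show ?thesis
      proof (cases "b \<in> Os")
        case bO: True
        obtain v where v: "\<sigma> b = {0,v}" "0 < v" "v < n" "v \<noteq> i" "v \<noteq> j" using Osdesc[OF bO] by blast
        show ?thesis
        proof (cases "a = b")
          case True then show ?thesis using u aO \<tau>Os[OF aO] hO[OF aO] by (simp add: c1_def)
        next
          case False
          then have "u \<noteq> v" using u v inj\<sigma> ab by (metis atLeastLessThan_iff inj_on_eq_iff zero_le)
          moreover have "h a \<noteq> h b" using False hinj aO bO by (metis inj_on_eq_iff)
          ultimately show ?thesis using u v \<tau>Os[OF aO] \<tau>Os[OF bO] hO[OF aO] hO[OF bO]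
            by (simp add: c1_def insert_Diff_if card_insert_if)
        qed
      next
        case False
        then consider "b = ai" | "b = aj" | "b = af" using cases_a[OF ab(2)] by auto
        then show ?thesis
          by cases (use u \<tau>Os[OF aO] hO[OF aO] \<tau>ai \<tau>aj \<tau>af ai aj af nz in
             \<open>simp_all add: c1_def insert_Diff_if card_insert_if insert_commute\<close>)
      qed
    next
      case aO: False
      then consider "a = ai" | "a = aj" | "a = af" using cases_a[OF ab(1)] by auto
      note ca = this
      show ?thesis
      proof (cases "b \<in> Os")
        case bO: True
        obtain v where v: "\<sigma> b = {0,v}" "0 < v" "v < n" "v \<noteq> i" "v \<noteq> j" using Osdesc[OF bO] by blast
        from ca show ?thesis
          by cases (use v \<tau>Os[OF bO] hO[OF bO] \<tau>ai \<tau>aj \<tau>af ai aj af nz in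
             \<open>simp_all add: c1_def insert_Diff_if card_insert_if insert_commute\<close>)
      next
        case False
        then consider "b = ai" | "b = aj" | "b = af" using cases_a[OF ab(2)] by auto
        then show ?thesis
          by cases (use ca \<tau>ai \<tau>aj \<tau>af ai aj af nz in
             \<open>(cases rule: ca; simp add: c1_def insert_Diff_if card_insert_if insert_commute)+\<close>)
      qed
    qed
  qed

  define M where "M = steiner2_submatrix n {0..<n} (star_edges n) \<sigma>"
  have Mc: "M \<in> carrier_mat n n" by (simp add: M_def steiner2_submatrix_def)
  have Me: "M $$ (a,b) = c1 k (\<tau> a) (\<tau> b)" if "a < n" "b < n" for a b
    using that entry c1eq by (simp add: M_def steiner2_submatrix_def)
  have \<tau>n: "a < n \<Longrightarrow> \<tau> a < n" for a using \<tau>img by force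
  have \<tau>eq: "a < n \<Longrightarrow> b < n \<Longrightarrow> (\<tau> a = \<tau> b) = (a = b)" for a b
    using inj\<tau> by (auto dest: inj_onD)
  have GGc: "GG x k 1 \<in> carrier_mat n n" for x by (simp add: GG_def nk)
  have pe: "poly (char_poly M) x = det (GG x k 1)" for x
  proof -
    have "poly (char_poly M) x = det (mat n n (\<lambda>(a,b). GG x k 1 $$ (\<tau> a, \<tau> b)))"
      unfolding char_poly_def
      by (rule poly_det_cong[of _ n], insert Mc, auto simp: char_poly_matrix_def Me \<tau>n \<tau>eq \<tau>n[unfolded nk] \<tau>eq[unfolded nk] GG_def nk g1 simp del: One_nat_def)
    also have "\<dots> = det (GG x k 1)" by (rule det_perm_sim[OF GGc \<tau>perm])
    finally show ?thesis .
  qed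
  have "poly (char_poly M) x = poly ([:1, 1:] ^ (n - 3) *
    [:- (real n - 1), - 7 * (real n - 2), - 2 * (real n - 1), 1:]) x" for x
  proof (cases k)
    case 0
    then have "n = 3" using nk by simp
    then show ?thesis using 0 pe GG_base0 by (simp add: power2_eq_square power3_eq_cube algebra_simps)
  next
    case (Suc k')
    have rn: "real n = real k' + 4" using nk Suc by simp
    have "poly (char_poly M) x = (x+1)^k' * ((x+1) * ((x+1-2*(1 + real k'))*((x-3)*(x-2) - 8) + 4*((-2*(1 + real k'))*(x-2) - 6*(1 + real k')) - 3*(8*(1 + real k') + (x-3)*(3*(1 + real k')))))"
    proof -
      have "poly (char_poly M) x = (x+1)^k' * det (GG x 1 (1 + real k'))"
        using pe[of x] GG_iter[of k x 1] Suc by simp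
      then show ?thesis unfolding GG_base1 .
    qed
    also have "\<dots> = (1+x)^(Suc k') * (- (real n - 1) + x * (- 7 * (real n - 2) + x * (- 2 * (real n - 1) + x)))"
      unfolding rn by (simp add: algebra_simps power2_eq_square power3_eq_cube)
    finally show ?thesis using Suc nk by (simp add: algebra_simps)
  qed
  then show ?thesis unfolding M_def[symmetric] using poly_eq_poly_eq_iff by blast
qed

end
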